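(* Let $X$ and $Y$ be finite $T_0$-spaces. If $X$ is simple homotopy equivalent to $Y$, then $\overline{\mathrm{rank}}(X)=\overline{\mathrm{rank}}(Y)$, where $\overline{\mathrm{rank}}(X):=|X|-\mathrm{rank}(X_M)$.
   Context: A finite $T_0$-space is identified with a finite poset via $x\le y$ iff $U_x\subseteq U_y$, where $U_x$ is the minimal open set containing $x$. For a labelling $X=\{x_1,\dots,x_n\}$, $X_M=(x_{i,j})$ is the $n\times n$ matrix with $x_{i,j}=0$ if $x_i\le x_j$ and $x_{i,j}=1$ otherwise. A point $x$ is a weak beat point if $\{y:y<x\}$ is contractible or $\{y:y>x\}$ is contractible. Two finite $T_0$-spaces are simple homotopy equivalent if one can be obtained from the other (up to homeomorphism) by a finite sequence of adding and removing weak beat points one at a time. *)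

theory Defs
  imports "HOL-Analysis.Homotopy" "Jordan_Normal_Form.DL_Rank"
begin

text \<open>A finite T0-space is represented as a finite poset (S, R): S a finite carrier,
  R \<subseteq> S \<times> S a partial order on S, with (x,y) \<in> R meaning x \<le> y, i.e. U_x \<subseteq> U_y.\<close>

definition finite_T0 :: "'a set \<Rightarrow> ('a \<times> 'a) set \<Rightarrow> bool" where
  "finite_T0 S R \<longleftrightarrow> finite S \<and> R \<subseteq> S \<times> S \<and> (\<forall>x\<in>S. (x,x) \<in> R)
     \<and> (\<forall>x y. (x,y) \<in> R \<and> (y,x) \<in> R \<longrightarrow> x = y)
     \<and> (\<forall>x y z. (x,y) \<in> R \<and> (y,z) \<in> R \<longrightarrow> (x,z) \<in> R)"

definition poset_topology :: "'a set \<Rightarrow> ('a \<times> 'a) set \<Rightarrow> 'a topology" where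
  "poset_topology S R = topology (\<lambda>U. U \<subseteq> S \<and> (\<forall>x\<in>U. \<forall>y\<in>S. (y,x) \<in> R \<longrightarrow> y \<in> U))"

text \<open>Contractibility of a subspace A (with the induced order); the empty space is not contractible.\<close>

definition poset_contractible :: "'a set \<Rightarrow> ('a \<times> 'a) set \<Rightarrow> bool" where
  "poset_contractible A R \<longleftrightarrow> A \<noteq> {} \<and> contractible_space (poset_topology A (R \<inter> (A \<times> A)))"

definition weak_beat_point :: "'a set \<Rightarrow> ('a \<times> 'a) set \<Rightarrow> 'a \<Rightarrow> bool" where
  "weak_beat_point S R x \<longleftrightarrow> x \<in> S \<and>
     (poset_contractible {y \<in> S. (y,x) \<in> R \<and> y \<noteq> x} R \<or>
      poset_contractible {y \<in> S. (x,y) \<in> R \<and> y \<noteq> x} R)"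

text \<open>Homeomorphism of finite T0-spaces = order isomorphism.\<close>

definition poset_homeomorphic :: "'a set \<Rightarrow> ('a \<times> 'a) set \<Rightarrow> 'b set \<Rightarrow> ('b \<times> 'b) set \<Rightarrow> bool" where
  "poset_homeomorphic S R T Q \<longleftrightarrow>
     (\<exists>f. bij_betw f S T \<and> (\<forall>x\<in>S. \<forall>y\<in>S. (x,y) \<in> R \<longleftrightarrow> (f x, f y) \<in> Q))"

text \<open>One elementary move: removing or adding a single weak beat point
  (spaces realised inside the infinite type nat, so fresh points are always available).\<close>

definition elementary_move :: "nat set \<times> (nat \<times> nat) set \<Rightarrow> nat set \<times> (nat \<times> nat) set \<Rightarrow> bool" where
  "elementary_move P Q \<longleftrightarrow> finite_T0 (fst P) (snd P) \<and> finite_T0 (fst Q) (snd Q) \<and>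
     ((\<exists>x. weak_beat_point (fst P) (snd P) x \<and> fst Q = fst P - {x}
           \<and> snd Q = snd P \<inter> (fst Q \<times> fst Q)) \<or>
      (\<exists>x. weak_beat_point (fst Q) (snd Q) x \<and> fst P = fst Q - {x}
           \<and> snd P = snd Q \<inter> (fst P \<times> fst P)))"

definition simple_homotopy_equivalent ::
  "'a set \<Rightarrow> ('a \<times> 'a) set \<Rightarrow> 'b set \<Rightarrow> ('b \<times> 'b) set \<Rightarrow> bool" where
  "simple_homotopy_equivalent S R T Q \<longleftrightarrow>
     (\<exists>P0 P1. poset_homeomorphic S R (fst P0) (snd P0) \<and> elementary_move\<^sup>*\<^sup>* P0 P1
        \<and> poset_homeomorphic (fst P1) (snd P1) T Q)"

definition poset_matrix :: "'a set \<Rightarrow> ('a \<times> 'a) set \<Rightarrow> (nat \<Rightarrow> 'a) \<Rightarrow> real mat" where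
  "poset_matrix S R lab = mat (card S) (card S) (\<lambda>(i,j). if (lab i, lab j) \<in> R then 0 else 1)"

definition rank_bar :: "'a set \<Rightarrow> ('a \<times> 'a) set \<Rightarrow> int" where
  "rank_bar S R = int (card S) -
     int (vec_space.rank (card S) (poset_matrix S R (SOME lab. bij_betw lab {..<card S} S)))"

end

theory Submission
  imports Defs
begin

definition pchains :: "'a set \<Rightarrow> ('a \<times> 'a) set \<Rightarrow> 'a set set" where
  "pchains S R = {c. c \<subseteq> S \<and> (\<forall>a\<in>c. \<forall>b\<in>c. (a,b) \<in> R \<or> (b,a) \<in> R)}"

definition ech :: "'a set \<Rightarrow> ('a \<times> 'a) set \<Rightarrow> int" where
  "ech S R = (\<Sum>c\<in>pchains S R. (-1) ^ card c)"

lemma finite_pchains: "finite S \<Longrightarrow> finite (pchains S R)"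
  unfolding pchains_def by (rule finite_subset[of _ "Pow S"]) auto

lemma pchains_restrict: "pchains S (R \<inter> (S \<times> S)) = pchains S R"
  unfolding pchains_def by blast

lemma ech_restrict: "ech S (R \<inter> (S \<times> S)) = ech S R"
  unfolding ech_def pchains_restrict ..

lemma ech_cone:
  assumes fin: "finite S" and m: "m \<in> S" and cmp: "\<forall>z\<in>S. (m,z) \<in> R \<or> (z,m) \<in> R"
    and refl: "(m,m) \<in> R"
  shows "ech S R = 0"
proof -
  let ?A0 = "{c\<in>pchains S R. m \<notin> c}"
  let ?A1 = "{c\<in>pchains S R. m \<in> c}"
  have fc: "finite (pchains S R)" using fin by (rule finite_pchains)
  have split: "pchains S R = ?A0 \<union> ?A1" by blast
  have A1: "?A1 = insert m ` ?A0"
  proof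
    show "?A1 \<subseteq> insert m ` ?A0"
    proof
      fix c assume c: "c \<in> ?A1"
      then have "c - {m} \<in> ?A0" unfolding pchains_def by auto
      moreover have "c = insert m (c - {m})" using c by auto
      ultimately show "c \<in> insert m ` ?A0" by blast
    qed
    show "insert m ` ?A0 \<subseteq> ?A1"
      using m cmp refl unfolding pchains_def by auto
  qed
  have inj: "inj_on (insert m) ?A0"
    unfolding inj_on_def by auto
  have "(\<Sum>c\<in>?A0 \<union> ?A1. (-1::int) ^ card c) = (\<Sum>c\<in>?A0. (-1) ^ card c) + (\<Sum>c\<in>?A1. (-1) ^ card c)"
    by (rule sum.union_disjoint) (use fc in auto)
  then have "ech S R = (\<Sum>c\<in>?A0. (-1) ^ card c) + (\<Sum>c\<in>?A1. (-1) ^ card c)"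
    unfolding ech_def using split by simp
  also have "(\<Sum>c\<in>?A1. (-1::int) ^ card c) = (\<Sum>c\<in>?A0. (-1) ^ card (insert m c))"
    unfolding A1 by (rule sum.reindex[OF inj, unfolded comp_def])
  also have "\<dots> = (\<Sum>c\<in>?A0. - ((-1) ^ card c))"
  proof (rule sum.cong)
    fix c assume c: "c \<in> ?A0"
    then have "finite c" using fin unfolding pchains_def by (auto intro: finite_subset)
    then show "(-1::int) ^ card (insert m c) = - ((-1) ^ card c)" using c by simp
  qed simp
  finally show ?thesis by (simp add: sum_negf)
qed

lemma ech_remove:
  assumes fin: "finite S" and x: "x \<in> S" and reflx: "(x,x) \<in> R"
    and trans: "\<forall>a b c. (a,b) \<in> R \<and> (b,c) \<in> R \<longrightarrow> (a,c) \<in> R"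
    and antisym: "\<forall>a b. (a,b) \<in> R \<and> (b,a) \<in> R \<longrightarrow> a = b"
  shows "ech S R = ech (S - {x}) R
     - ech {y\<in>S. (y,x) \<in> R \<and> y \<noteq> x} R * ech {y\<in>S. (x,y) \<in> R \<and> y \<noteq> x} R"
proof -
  define D where "D = {y\<in>S. (y,x) \<in> R \<and> y \<noteq> x}"
  define U where "U = {y\<in>S. (x,y) \<in> R \<and> y \<noteq> x}"
  let ?B = "{c\<in>pchains S R. x \<in> c}"
  have fc: "finite (pchains S R)" using fin by (rule finite_pchains)
  have split: "pchains S R = pchains (S - {x}) R \<union> ?B" unfolding pchains_def by blast
  have DU: "D \<inter> U = {}" using antisym unfolding D_def U_def by blast
  have xDU: "x \<notin> D" "x \<notin> U" unfolding D_def U_def by auto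
  have finD: "finite D" "finite U" using fin unfolding D_def U_def by auto
  define h where "h = (\<lambda>(a::'a set,b). insert x (a \<union> b))"
  have bij: "bij_betw h (pchains D R \<times> pchains U R) ?B"
  proof (rule bij_betwI')
    fix p q assume p: "p \<in> pchains D R \<times> pchains U R" and q: "q \<in> pchains D R \<times> pchains U R"
    obtain a b where ab: "p = (a,b)" by (cases p)
    obtain a' b' where ab': "q = (a',b')" by (cases q)
    have sub: "a \<subseteq> D" "b \<subseteq> U" "a' \<subseteq> D" "b' \<subseteq> U" using p q ab ab' unfolding pchains_def by auto
    show "(h p = h q) = (p = q)"
    proof
      assume "h p = h q"
      then have e: "insert x (a \<union> b) = insert x (a' \<union> b')" unfolding h_def ab ab' by simp
      have "a = insert x (a \<union> b) \<inter> D" using sub DU xDU by blast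
      moreover have "a' = insert x (a' \<union> b') \<inter> D" using sub DU xDU by blast
      moreover have "b = insert x (a \<union> b) \<inter> U" using sub DU xDU by blast
      moreover have "b' = insert x (a' \<union> b') \<inter> U" using sub DU xDU by blast
      ultimately show "p = q" using e ab ab' by simp
    qed simp
  next
    fix p assume p: "p \<in> pchains D R \<times> pchains U R"
    obtain a b where ab: "p = (a,b)" by (cases p)
    have a: "a \<subseteq> D" "\<forall>u\<in>a. \<forall>v\<in>a. (u,v) \<in> R \<or> (v,u) \<in> R"
      and b: "b \<subseteq> U" "\<forall>u\<in>b. \<forall>v\<in>b. (u,v) \<in> R \<or> (v,u) \<in> R"
      using p ab unfolding pchains_def by auto
    have "\<forall>u\<in>a. \<forall>v\<in>b. (u,v) \<in> R" using a(1) b(1) trans unfolding D_def U_def by blast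
    then show "h p \<in> ?B" using a b x reflx unfolding h_def ab pchains_def D_def U_def by auto
  next
    fix c assume c: "c \<in> ?B"
    have "c \<inter> D \<in> pchains D R" "c \<inter> U \<in> pchains U R" using c unfolding pchains_def by auto
    moreover have "c = h (c \<inter> D, c \<inter> U)"
    proof -
      have "\<forall>y\<in>c. y = x \<or> y \<in> D \<or> y \<in> U" using c unfolding pchains_def D_def U_def by blast
      then show ?thesis using c unfolding h_def by auto
    qed
    ultimately show "\<exists>p\<in>pchains D R \<times> pchains U R. c = h p" by blast
  qed
  have "(\<Sum>c\<in>?B. (-1::int) ^ card c) = (\<Sum>p\<in>pchains D R \<times> pchains U R. (-1) ^ card (h p))"
    using sum.reindex_bij_betw[OF bij, of "\<lambda>c. (-1::int) ^ card c"] by simp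
  also have "\<dots> = (\<Sum>p\<in>pchains D R \<times> pchains U R. - ((-1) ^ card (fst p) * (-1) ^ card (snd p)))"
  proof (rule sum.cong)
    fix p assume p: "p \<in> pchains D R \<times> pchains U R"
    obtain a b where ab: "p = (a,b)" by (cases p)
    have sub: "a \<subseteq> D" "b \<subseteq> U" using p ab unfolding pchains_def by auto
    have fa: "finite a" "finite b" using sub finD by (auto intro: finite_subset)
    have "card (h p) = Suc (card a + card b)"
    proof -
      have "x \<notin> a \<union> b" using sub xDU by blast
      moreover have "card (a \<union> b) = card a + card b"
        using fa sub DU by (intro card_Un_disjoint) auto
      ultimately show ?thesis unfolding h_def ab using fa by simp
    qed
    then show "(-1::int) ^ card (h p) = - ((-1) ^ card (fst p) * (-1) ^ card (snd p))"
      using ab by (simp add: power_add)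
  qed simp
  also have "\<dots> = - (ech D R * ech U R)"
    unfolding ech_def sum_product sum.cartesian_product sum_negf by (simp add: case_prod_beta)
  finally have B: "(\<Sum>c\<in>?B. (-1::int) ^ card c) = - (ech D R * ech U R)" .
  have "(\<Sum>c\<in>pchains (S - {x}) R \<union> ?B. (-1::int) ^ card c) = (\<Sum>c\<in>pchains (S - {x}) R. (-1) ^ card c) + (\<Sum>c\<in>?B. (-1) ^ card c)"
    by (rule sum.union_disjoint) (use fc fin in \<open>auto simp: pchains_def intro: finite_pchains\<close>)
  then have "ech S R = ech (S - {x}) R + (\<Sum>c\<in>?B. (-1) ^ card c)"
    unfolding ech_def using split by simp
  then show ?thesis using B unfolding D_def U_def by simp
qed

lemma T0_fin: "finite_T0 S R \<Longrightarrow> finite S" unfolding finite_T0_def by blast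
lemma T0_refl: "finite_T0 S R \<Longrightarrow> x \<in> S \<Longrightarrow> (x,x) \<in> R" unfolding finite_T0_def by blast
lemma T0_antisym: "finite_T0 S R \<Longrightarrow> (x,y) \<in> R \<Longrightarrow> (y,x) \<in> R \<Longrightarrow> x = y" unfolding finite_T0_def by blast
lemma T0_trans: "finite_T0 S R \<Longrightarrow> (x,y) \<in> R \<Longrightarrow> (y,z) \<in> R \<Longrightarrow> (x,z) \<in> R" unfolding finite_T0_def by blast
lemma T0_sub: "finite_T0 S R \<Longrightarrow> (x,y) \<in> R \<Longrightarrow> x \<in> S \<and> y \<in> S" unfolding finite_T0_def by blast
lemma T0_antisymA: "finite_T0 S R \<Longrightarrow> \<forall>a b. (a,b) \<in> R \<and> (b,a) \<in> R \<longrightarrow> a = b" unfolding finite_T0_def by blast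
lemma T0_transA: "finite_T0 S R \<Longrightarrow> \<forall>a b c. (a,b) \<in> R \<and> (b,c) \<in> R \<longrightarrow> (a,c) \<in> R" unfolding finite_T0_def by blast

lemma finite_has_minimal_rel:
  assumes "finite B" "B \<noteq> {}"
    and trans: "\<forall>a b c. (a,b) \<in> R \<and> (b,c) \<in> R \<longrightarrow> (a,c) \<in> R"
    and antisym: "\<forall>a b. (a,b) \<in> R \<and> (b,a) \<in> R \<longrightarrow> a = b"
  shows "\<exists>m\<in>B. \<forall>y\<in>B. (y,m) \<in> R \<longrightarrow> y = m"
  using assms(1,2)
proof (induction B rule: finite_ne_induct)
  case (singleton x) then show ?case by auto
next
  case (insert a B)
  then obtain m where m: "m \<in> B" "\<forall>y\<in>B. (y,m) \<in> R \<longrightarrow> y = m" by auto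
  show ?case
  proof (cases "(a,m) \<in> R")
    case True
    have "\<forall>y\<in>insert a B. (y,a) \<in> R \<longrightarrow> y = a"
    proof (intro ballI impI)
      fix y assume y: "y \<in> insert a B" "(y,a) \<in> R"
      show "y = a"
      proof (cases "y = a")
        case False
        then have "y \<in> B" using y by auto
        moreover have "(y,m) \<in> R" using y True trans by blast
        ultimately have "y = m" using m by auto
        then show ?thesis using y True antisym by blast
      qed
    qed
    then show ?thesis by auto
  next
    case False
    then show ?thesis using m by auto
  qed
qed

lemma finite_has_maximal_rel:
  assumes "finite B" "B \<noteq> {}"
    and trans: "\<forall>a b c. (a,b) \<in> R \<and> (b,c) \<in> R \<longrightarrow> (a,c) \<in> R"
    and antisym: "\<forall>a b. (a,b) \<in> R \<and> (b,a) \<in> R \<longrightarrow> a = b"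
  shows "\<exists>m\<in>B. \<forall>y\<in>B. (m,y) \<in> R \<longrightarrow> y = m"
proof -
  have t: "\<forall>a b c. (a,b) \<in> R\<inverse> \<and> (b,c) \<in> R\<inverse> \<longrightarrow> (a,c) \<in> R\<inverse>" using trans by blast
  have a: "\<forall>a b. (a,b) \<in> R\<inverse> \<and> (b,a) \<in> R\<inverse> \<longrightarrow> a = b" using antisym by blast
  obtain m where "m \<in> B" "\<forall>y\<in>B. (y,m) \<in> R\<inverse> \<longrightarrow> y = m"
    using finite_has_minimal_rel[OF assms(1,2) t a] by blast
  then show ?thesis by blast
qed

lemma Z_inj:
  fixes \<phi> :: "'a \<Rightarrow> real"
  assumes T0: "finite_T0 S R"
    and h: "\<forall>x\<in>S. (\<Sum>y\<in>{y\<in>S. (x,y) \<in> R}. \<phi> y) = 0"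
  shows "\<forall>x\<in>S. \<phi> x = 0"
proof (rule ccontr)
  assume "\<not> ?thesis"
  then have ne: "{x\<in>S. \<phi> x \<noteq> 0} \<noteq> {}" by auto
  have fin: "finite S" using T0 by (rule T0_fin)
  have fin': "finite {x\<in>S. \<phi> x \<noteq> 0}" using fin by simp
  obtain m where m: "m \<in> {x\<in>S. \<phi> x \<noteq> 0}" "\<forall>y\<in>{x\<in>S. \<phi> x \<noteq> 0}. (m,y) \<in> R \<longrightarrow> y = m"
    using finite_has_maximal_rel[OF fin' ne T0_transA[OF T0] T0_antisymA[OF T0]] by blast
  have mm: "(m,m) \<in> R" using m T0_refl[OF T0] by blast
  have "(\<Sum>y\<in>{y\<in>S. (m,y) \<in> R}. \<phi> y) = \<phi> m + (\<Sum>y\<in>{y\<in>S. (m,y) \<in> R} - {m}. \<phi> y)"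
    using fin m mm by (intro sum.remove) auto
  also have "(\<Sum>y\<in>{y\<in>S. (m,y) \<in> R} - {m}. \<phi> y) = 0"
    using m by (intro sum.neutral) auto
  finally show False using h m by auto
qed

definition wfun :: "'a set \<Rightarrow> ('a \<times> 'a) set \<Rightarrow> 'a \<Rightarrow> int" where
  "wfun S R y = - (\<Sum>c\<in>{c\<in>pchains S R. y \<in> c \<and> (\<forall>z\<in>c. (y,z) \<in> R)}. (-1) ^ card c)"

lemma card_least:
  assumes T0: "finite_T0 S R" and c: "c \<in> pchains T R" "c \<noteq> {}" and T: "T \<subseteq> S"
  shows "card {y\<in>T. y \<in> c \<and> (\<forall>z\<in>c. (y,z) \<in> R)} = 1"
proof -
  have cS: "c \<subseteq> S" using c T unfolding pchains_def by blast
  have fin: "finite c" using finite_subset[OF cS T0_fin[OF T0]] .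
  obtain m where m: "m \<in> c" "\<forall>y\<in>c. (y,m) \<in> R \<longrightarrow> y = m"
    using finite_has_minimal_rel[OF fin c(2) T0_transA[OF T0] T0_antisymA[OF T0]] by blast
  have least: "\<forall>z\<in>c. (m,z) \<in> R"
  proof
    fix z assume z: "z \<in> c"
    then have "(m,z) \<in> R \<or> (z,m) \<in> R" using m c unfolding pchains_def by auto
    then show "(m,z) \<in> R" using m z cS T0_refl[OF T0] by blast
  qed
  have "{y\<in>T. y \<in> c \<and> (\<forall>z\<in>c. (y,z) \<in> R)} = {m}"
  proof
    show "{m} \<subseteq> {y\<in>T. y \<in> c \<and> (\<forall>z\<in>c. (y,z) \<in> R)}" using m least c unfolding pchains_def by auto
    show "{y\<in>T. y \<in> c \<and> (\<forall>z\<in>c. (y,z) \<in> R)} \<subseteq> {m}"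
      using least m T0_antisym[OF T0] by blast
  qed
  then show ?thesis by simp
qed

lemma wfun_sum:
  assumes T0: "finite_T0 S R" and T: "T \<subseteq> S"
    and up: "\<forall>y\<in>T. \<forall>z\<in>S. (y,z) \<in> R \<longrightarrow> z \<in> T"
  shows "(\<Sum>y\<in>T. wfun S R y) = 1 - ech T R"
proof -
  have finS: "finite S" using T0 by (rule T0_fin)
  have finT: "finite T" using finS T by (rule finite_subset[rotated])
  let ?P = "pchains T R"
  let ?L = "\<lambda>y c. y \<in> c \<and> (\<forall>z\<in>c. (y,z) \<in> R)"
  have finP: "finite ?P" using finT by (rule finite_pchains)
  have eq: "{c\<in>pchains S R. ?L y c} = {c\<in>?P. ?L y c}" if y: "y \<in> T" for y
    using y T up unfolding pchains_def by blast
  have "(\<Sum>y\<in>T. wfun S R y) = - (\<Sum>y\<in>T. \<Sum>c\<in>{c\<in>?P. ?L y c}. (-1::int) ^ card c)"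
    unfolding wfun_def sum_negf using eq by (intro arg_cong[where f=uminus] sum.cong) auto
  also have "(\<Sum>y\<in>T. \<Sum>c\<in>{c\<in>?P. ?L y c}. (-1::int) ^ card c)
      = (\<Sum>c\<in>?P. \<Sum>y\<in>{y\<in>T. ?L y c}. (-1::int) ^ card c)"
    using sum.swap_restrict[OF finT finP, of "\<lambda>y c. (-1::int) ^ card c" ?L] by simp
  also have "\<dots> = (\<Sum>c\<in>?P. if c = {} then 0 else (-1::int) ^ card c)"
  proof (rule sum.cong)
    fix c assume c: "c \<in> ?P"
    show "(\<Sum>y\<in>{y\<in>T. ?L y c}. (-1::int) ^ card c) = (if c = {} then 0 else (-1) ^ card c)"
    proof (cases "c = {}")
      case False
      then show ?thesis using card_least[OF T0 c False T] by simp
    qed simp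
  qed simp
  also have "\<dots> = ech T R - 1"
  proof -
    have e: "{} \<in> ?P" unfolding pchains_def by auto
    have "ech T R = (-1) ^ card ({}::'a set) + (\<Sum>c\<in>?P - {{}}. (-1) ^ card c)"
      unfolding ech_def using finP e by (rule sum.remove)
    moreover have "(\<Sum>c\<in>?P. if c = {} then 0 else (-1::int) ^ card c) = (\<Sum>c\<in>?P - {{}}. (-1) ^ card c)"
      using finP e by (subst sum.remove[OF finP e]) (auto intro: sum.cong)
    moreover have "(-1::int) ^ card ({}::'a set) = 1" by simp
    ultimately show ?thesis by linarith
  qed
  finally show ?thesis by linarith
qed

lemma wfun_up:
  assumes T0: "finite_T0 S R" and x: "x \<in> S"
  shows "(\<Sum>y\<in>{y\<in>S. (x,y) \<in> R}. wfun S R y) = 1"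
proof -
  have "(\<Sum>y\<in>{y\<in>S. (x,y) \<in> R}. wfun S R y) = 1 - ech {y\<in>S. (x,y) \<in> R} R"
  proof (rule wfun_sum[OF T0])
    show "\<forall>y\<in>{y\<in>S. (x,y) \<in> R}. \<forall>z\<in>S. (y,z) \<in> R \<longrightarrow> z \<in> {y\<in>S. (x,y) \<in> R}"
      using T0_trans[OF T0, of x] by blast
  qed blast
  moreover have "ech {y\<in>S. (x,y) \<in> R} R = 0"
  proof (rule ech_cone[of _ x])
    show "finite {y\<in>S. (x,y) \<in> R}" using T0_fin[OF T0] by simp
    show "x \<in> {y\<in>S. (x,y) \<in> R}" "(x,x) \<in> R" using x T0_refl[OF T0 x] by auto
  qed blast
  ultimately show ?thesis by simp
qed

lemma ker_iff:
  assumes T0: "finite_T0 S R"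
  shows "(\<exists>\<phi>::'a\<Rightarrow>real. (\<exists>x\<in>S. \<phi> x \<noteq> 0) \<and>
            (\<forall>x\<in>S. (\<Sum>y\<in>S. (if (x,y) \<in> R then 0 else 1) * \<phi> y) = 0)) \<longleftrightarrow> ech S R = 0"
proof -
  have finS: "finite S" using T0 by (rule T0_fin)
  have decomp: "(\<Sum>y\<in>S. (if (x,y) \<in> R then 0 else 1) * \<phi> y) = sum \<phi> S - (\<Sum>y\<in>{y\<in>S. (x,y) \<in> R}. \<phi> y)"
    for x and \<phi> :: "'a \<Rightarrow> real"
  proof -
    have "(\<Sum>y\<in>S. (if (x,y) \<in> R then 0 else 1) * \<phi> y) = (\<Sum>y\<in>S. \<phi> y - (if (x,y) \<in> R then \<phi> y else 0))"
      by (intro sum.cong) auto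
    also have "\<dots> = sum \<phi> S - (\<Sum>y\<in>S. if (x,y) \<in> R then \<phi> y else 0)"
      by (simp add: sum_subtractf)
    also have "(\<Sum>y\<in>S. if (x,y) \<in> R then \<phi> y else 0) = (\<Sum>y\<in>{y\<in>S. (x,y) \<in> R}. \<phi> y)"
      using finS by (simp add: sum.inter_filter)
    finally show ?thesis .
  qed
  let ?w = "\<lambda>y. real_of_int (wfun S R y)"
  have wS: "sum ?w S = 1 - of_int (ech S R)"
    using wfun_sum[OF T0 order_refl] by (simp flip: of_int_sum)
  have wup: "\<forall>x\<in>S. (\<Sum>y\<in>{y\<in>S. (x,y) \<in> R}. ?w y) = 1"
    using wfun_up[OF T0] by (metis of_int_1 of_int_sum)
  show ?thesis
  proof
    assume "\<exists>\<phi>::'a\<Rightarrow>real. (\<exists>x\<in>S. \<phi> x \<noteq> 0) \<and> (\<forall>x\<in>S. (\<Sum>y\<in>S. (if (x,y) \<in> R then 0 else 1) * \<phi> y) = 0)"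
    then obtain \<phi> :: "'a \<Rightarrow> real" where nz: "\<exists>x\<in>S. \<phi> x \<noteq> 0"
      and k: "\<forall>x\<in>S. (\<Sum>y\<in>S. (if (x,y) \<in> R then 0 else 1) * \<phi> y) = 0" by blast
    define c where "c = sum \<phi> S"
    have up: "\<forall>x\<in>S. (\<Sum>y\<in>{y\<in>S. (x,y) \<in> R}. \<phi> y) = c"
      using k decomp unfolding c_def by auto
    have c0: "c \<noteq> 0"
    proof
      assume "c = 0"
      then have "\<forall>x\<in>S. \<phi> x = 0" using Z_inj[OF T0] up by auto
      then show False using nz by auto
    qed
    let ?psi = "\<lambda>y. \<phi> y / c - ?w y"
    have "\<forall>x\<in>S. (\<Sum>y\<in>{y\<in>S. (x,y) \<in> R}. ?psi y) = 0"
    proof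
      fix x assume x: "x \<in> S"
      have "(\<Sum>y\<in>{y\<in>S. (x,y) \<in> R}. ?psi y)
          = (\<Sum>y\<in>{y\<in>S. (x,y) \<in> R}. \<phi> y) / c - (\<Sum>y\<in>{y\<in>S. (x,y) \<in> R}. ?w y)"
        by (simp add: sum_subtractf sum_divide_distrib)
      then show "(\<Sum>y\<in>{y\<in>S. (x,y) \<in> R}. ?psi y) = 0" using up wup x c0 by simp
    qed
    then have "\<forall>x\<in>S. ?psi x = 0" using Z_inj[OF T0] by blast
    then have "sum ?w S = sum (\<lambda>y. \<phi> y / c) S" by (intro sum.cong) auto
    also have "\<dots> = 1" using c0 unfolding c_def by (simp add: sum_divide_distrib[symmetric])
    finally show "ech S R = 0" using wS by simp
  next
    assume e: "ech S R = 0"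
    show "\<exists>\<phi>::'a\<Rightarrow>real. (\<exists>x\<in>S. \<phi> x \<noteq> 0) \<and> (\<forall>x\<in>S. (\<Sum>y\<in>S. (if (x,y) \<in> R then 0 else 1) * \<phi> y) = 0)"
    proof (intro exI conjI)
      show "\<exists>x\<in>S. ?w x \<noteq> 0"
      proof (rule ccontr)
        assume "\<not> (\<exists>x\<in>S. ?w x \<noteq> 0)"
        then have "sum ?w S = 0" by auto
        then show False using wS e by simp
      qed
      show "\<forall>x\<in>S. (\<Sum>y\<in>S. (if (x,y) \<in> R then 0 else 1) * ?w y) = 0"
        using decomp wS e wup by simp
    qed
  qed
qed

lemma ker_K:
  fixes \<phi> :: "'a \<Rightarrow> real"
  assumes T0: "finite_T0 S R"
    and h: "\<forall>x\<in>S. (\<Sum>y\<in>S. (if (x,y) \<in> R then -1 else 0) * \<phi> y) = 0"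
  shows "\<forall>x\<in>S. \<phi> x = 0"
proof -
  have finS: "finite S" using T0 by (rule T0_fin)
  have "\<forall>x\<in>S. (\<Sum>y\<in>{y\<in>S. (x,y) \<in> R}. \<phi> y) = 0"
  proof
    fix x assume x: "x \<in> S"
    have "(\<Sum>y\<in>S. (if (x,y) \<in> R then -1 else 0) * \<phi> y) = - (\<Sum>y\<in>S. if (x,y) \<in> R then \<phi> y else 0)"
      unfolding sum_negf[symmetric] by (rule sum.cong) auto
    also have "(\<Sum>y\<in>S. if (x,y) \<in> R then \<phi> y else 0) = (\<Sum>y\<in>{y\<in>S. (x,y) \<in> R}. \<phi> y)"
      using finS by (simp add: sum.inter_filter)
    finally show "(\<Sum>y\<in>{y\<in>S. (x,y) \<in> R}. \<phi> y) = 0" using h x by simp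
  qed
  then show ?thesis using Z_inj[OF T0] by blast
qed

lemma mat_vec_sum:
  assumes bij: "bij_betw lab {..<n} S" and v: "v \<in> carrier_vec n" and i: "i < n"
  shows "(mat n n (\<lambda>(i,j). a (lab i) (lab j)) *\<^sub>v v) $ i
         = (\<Sum>y\<in>S. a (lab i) y * v $ (inv_into {..<n} lab y))"
proof -
  let ?g = "inv_into {..<n} lab"
  have "(mat n n (\<lambda>(i,j). a (lab i) (lab j)) *\<^sub>v v) $ i
      = (\<Sum>j\<in>{0..<n}. a (lab i) (lab j) * v $ j)"
    using i v by (simp add: index_mult_mat_vec scalar_prod_def)
  also have "\<dots> = (\<Sum>j\<in>{..<n}. a (lab i) (lab j) * v $ (?g (lab j)))"
    using bij by (intro sum.cong) (auto simp: bij_betw_def inv_into_f_f)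
  also have "\<dots> = (\<Sum>y\<in>S. a (lab i) y * v $ (?g y))"
    using sum.reindex_bij_betw[OF bij, of "\<lambda>y. a (lab i) y * v $ (?g y)"] by simp
  finally show ?thesis .
qed

lemma ker_vec_iff:
  fixes a :: "'a \<Rightarrow> 'a \<Rightarrow> real"
  assumes bij: "bij_betw lab {..<n} S"
  shows "(\<exists>v. v \<in> carrier_vec n \<and> v \<noteq> 0\<^sub>v n \<and> mat n n (\<lambda>(i,j). a (lab i) (lab j)) *\<^sub>v v = 0\<^sub>v n)
    \<longleftrightarrow> (\<exists>\<phi>::'a\<Rightarrow>real. (\<exists>x\<in>S. \<phi> x \<noteq> 0) \<and> (\<forall>x\<in>S. (\<Sum>y\<in>S. a x y * \<phi> y) = 0))"
proof -
  let ?g = "inv_into {..<n} lab"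
  let ?M = "mat n n (\<lambda>(i,j). a (lab i) (lab j))"
  have labS: "\<And>j. j < n \<Longrightarrow> lab j \<in> S" using bij unfolding bij_betw_def by auto
  have gS: "\<And>y. y \<in> S \<Longrightarrow> ?g y < n \<and> lab (?g y) = y"
    using bij by (metis bij_betw_def bij_betw_inv_into_left bij_betw_inv_into inv_into_into lessThan_iff f_inv_into_f)
  have glab: "\<And>j. j < n \<Longrightarrow> ?g (lab j) = j"
    using bij unfolding bij_betw_def by (auto simp: inv_into_f_f)
  show ?thesis
  proof
    assume "\<exists>v. v \<in> carrier_vec n \<and> v \<noteq> 0\<^sub>v n \<and> ?M *\<^sub>v v = 0\<^sub>v n"
    then obtain v where v: "v \<in> carrier_vec n" "v \<noteq> 0\<^sub>v n" "?M *\<^sub>v v = 0\<^sub>v n" by blast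
    show "\<exists>\<phi>::'a\<Rightarrow>real. (\<exists>x\<in>S. \<phi> x \<noteq> 0) \<and> (\<forall>x\<in>S. (\<Sum>y\<in>S. a x y * \<phi> y) = 0)"
    proof (intro exI conjI)
      obtain j where j: "j < n" "v $ j \<noteq> 0"
        using v(1,2) by (metis carrier_vecD eq_vecI index_zero_vec(1,2))
      then show "\<exists>x\<in>S. v $ ?g x \<noteq> 0" using labS glab by metis
      show "\<forall>x\<in>S. (\<Sum>y\<in>S. a x y * v $ ?g y) = 0"
      proof
        fix x assume x: "x \<in> S"
        have "(?M *\<^sub>v v) $ (?g x) = 0" using v(3) gS[OF x] by simp
        then show "(\<Sum>y\<in>S. a x y * v $ ?g y) = 0"
          using mat_vec_sum[OF bij v(1), of "?g x" a] gS[OF x] by simp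
      qed
    qed
  next
    assume "\<exists>\<phi>::'a\<Rightarrow>real. (\<exists>x\<in>S. \<phi> x \<noteq> 0) \<and> (\<forall>x\<in>S. (\<Sum>y\<in>S. a x y * \<phi> y) = 0)"
    then obtain \<phi> :: "'a \<Rightarrow> real" where nz: "\<exists>x\<in>S. \<phi> x \<noteq> 0"
      and k: "\<forall>x\<in>S. (\<Sum>y\<in>S. a x y * \<phi> y) = 0" by blast
    define v where "v = vec n (\<lambda>j. \<phi> (lab j))"
    have vc: "v \<in> carrier_vec n" unfolding v_def by simp
    have vg: "\<And>y. y \<in> S \<Longrightarrow> v $ ?g y = \<phi> y" unfolding v_def using gS by simp
    show "\<exists>v. v \<in> carrier_vec n \<and> v \<noteq> 0\<^sub>v n \<and> ?M *\<^sub>v v = 0\<^sub>v n"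
    proof (intro exI conjI)
      show "v \<in> carrier_vec n" by (rule vc)
      show "v \<noteq> 0\<^sub>v n"
      proof
        assume "v = 0\<^sub>v n"
        then have "\<forall>y\<in>S. \<phi> y = 0"
        proof (intro ballI)
          fix y assume v0: "v = 0\<^sub>v n" and y: "y \<in> S"
          have "v $ ?g y = 0" using v0 gS[OF y] by simp
          then show "\<phi> y = 0" using vg[OF y] by simp
        qed
        then show False using nz by auto
      qed
      show "?M *\<^sub>v v = 0\<^sub>v n"
      proof (rule eq_vecI)
        fix i assume "i < dim_vec (0\<^sub>v n :: real vec)"
        then have i: "i < n" by simp
        have "(?M *\<^sub>v v) $ i = (\<Sum>y\<in>S. a (lab i) y * v $ ?g y)"
          by (rule mat_vec_sum[OF bij vc i])
        also have "\<dots> = (\<Sum>y\<in>S. a (lab i) y * \<phi> y)"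
          by (rule sum.cong) (simp_all add: vg)
        finally have "(?M *\<^sub>v v) $ i = (\<Sum>y\<in>S. a (lab i) y * \<phi> y)" .
        then show "(?M *\<^sub>v v) $ i = 0\<^sub>v n $ i" using k labS[OF i] i by simp
      qed simp
    qed
  qed
qed

lemma rank_bar_formula:
  assumes T0: "finite_T0 S R"
  shows "rank_bar S R = (if ech S R = 0 then 1 else 0)"
proof -
  define n where "n = card S"
  have finS: "finite S" using T0 by (rule T0_fin)
  have ex: "\<exists>lab. bij_betw lab {..<n} S"
    unfolding n_def atLeast0LessThan[symmetric] by (rule ex_bij_betw_nat_finite[OF finS])
  define lab where "lab = (SOME lab. bij_betw lab {..<n} S)"
  have bij: "bij_betw lab {..<n} S" unfolding lab_def using someI_ex[OF ex] .
  define M where "M = poset_matrix S R lab"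
  have rb: "rank_bar S R = int n - int (vec_space.rank n M)"
    unfolding rank_bar_def M_def n_def lab_def ..
  have Mdef: "M = mat n n (\<lambda>(i,j). if (lab i, lab j) \<in> R then 0 else 1::real)"
    unfolding M_def poset_matrix_def n_def ..
  have Mc: "M \<in> carrier_mat n n" unfolding Mdef by simp
  define K where "K = mat n n (\<lambda>(i,j). if (lab i, lab j) \<in> R then -1 else 0::real)"
  note kK = ker_vec_iff[OF bij, of "\<lambda>x y. if (x,y) \<in> R then -1 else 0::real"]
  note kM = ker_vec_iff[OF bij, of "\<lambda>x y. if (x,y) \<in> R then 0 else 1::real"]
  define J where "J = (mat n n (\<lambda>_. -1) :: real mat)"
  have Kc: "K \<in> carrier_mat n n" unfolding K_def by simp
  have Jc: "J \<in> carrier_mat n n" unfolding J_def by simp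
  have MJK: "M + J = K"
    unfolding Mdef J_def K_def by (rule eq_matI) simp_all
  have detK: "det K \<noteq> 0"
  proof
    assume "det K = 0"
    then have "\<exists>v. v \<in> carrier_vec n \<and> v \<noteq> 0\<^sub>v n \<and> K *\<^sub>v v = 0\<^sub>v n"
      using det_0_iff_vec_prod_zero_field[OF Kc] by simp
    then have "\<exists>\<phi>::'a\<Rightarrow>real. (\<exists>x\<in>S. \<phi> x \<noteq> 0) \<and> (\<forall>x\<in>S. (\<Sum>y\<in>S. (if (x,y) \<in> R then -1 else 0) * \<phi> y) = 0)"
      unfolding K_def by (rule kK[THEN iffD1])
    then obtain \<phi> :: "'a \<Rightarrow> real" where "\<exists>x\<in>S. \<phi> x \<noteq> 0"
      and "\<forall>x\<in>S. (\<Sum>y\<in>S. (if (x,y) \<in> R then -1 else 0) * \<phi> y) = 0"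
      by blast
    then show False using ker_K[OF T0] by blast
  qed
  have rK: "vec_space.rank n K = n" using vec_space.det_rank_iff[OF Kc] detK by simp
  have rJ: "vec_space.rank n J \<le> 1"
    by (rule vec_space.rank_le_1_product_entries[OF Jc, of "\<lambda>_. -1" "\<lambda>_. 1"]) (simp add: J_def)
  have "vec_space.rank n K \<le> vec_space.rank n M + vec_space.rank n J"
    using vec_space.rank_subadditive[OF Mc Jc] MJK by simp
  then have lo: "n \<le> vec_space.rank n M + 1" using rK rJ by simp
  have hi: "vec_space.rank n M \<le> n" by (rule vec_space.rank_le_nc[OF Mc])
  have "vec_space.rank n M = n \<longleftrightarrow> det M \<noteq> 0" using vec_space.det_rank_iff[OF Mc] by simp
  also have "det M \<noteq> 0 \<longleftrightarrow> \<not> (\<exists>v. v \<in> carrier_vec n \<and> v \<noteq> 0\<^sub>v n \<and> M *\<^sub>v v = 0\<^sub>v n)"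
    using det_0_iff_vec_prod_zero_field[OF Mc] by simp
  also have "(\<exists>v. v \<in> carrier_vec n \<and> v \<noteq> 0\<^sub>v n \<and> M *\<^sub>v v = 0\<^sub>v n) \<longleftrightarrow> ech S R = 0"
    unfolding Mdef by (rule trans[OF kM ker_iff[OF T0]])
  finally have iff: "vec_space.rank n M = n \<longleftrightarrow> ech S R \<noteq> 0" .
  show ?thesis
  proof (cases "ech S R = 0")
    case True
    then have "vec_space.rank n M \<noteq> n" using iff by simp
    then have "int n - int (vec_space.rank n M) = 1" using lo hi by linarith
    then show ?thesis using rb True by simp
  next
    case False
    then show ?thesis using iff rb by simp
  qed
qed

definition monor :: "'a set \<Rightarrow> ('a \<times> 'a) set \<Rightarrow> ('a \<Rightarrow> 'a) \<Rightarrow> bool" where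
  "monor S R f \<longleftrightarrow> (\<forall>x\<in>S. f x \<in> S) \<and> (\<forall>x\<in>S. \<forall>y\<in>S. (x,y) \<in> R \<longrightarrow> (f x, f y) \<in> R)"

definition cmp :: "'a set \<Rightarrow> ('a \<times> 'a) set \<Rightarrow> ('a \<Rightarrow> 'a) \<Rightarrow> ('a \<Rightarrow> 'a) \<Rightarrow> bool" where
  "cmp S R f g \<longleftrightarrow> monor S R f \<and> monor S R g \<and>
     ((\<forall>x\<in>S. (f x, g x) \<in> R) \<or> (\<forall>x\<in>S. (g x, f x) \<in> R))"

lemma openin_poset:
  "openin (poset_topology S R) U \<longleftrightarrow> U \<subseteq> S \<and> (\<forall>x\<in>U. \<forall>y\<in>S. (y,x) \<in> R \<longrightarrow> y \<in> U)"
proof -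
  have "istopology (\<lambda>U. U \<subseteq> S \<and> (\<forall>x\<in>U. \<forall>y\<in>S. (y,x) \<in> R \<longrightarrow> y \<in> U))"
    unfolding istopology_def by blast
  then show ?thesis unfolding poset_topology_def by (simp add: topology_inverse')
qed

lemma topspace_poset: "topspace (poset_topology S R) = S"
proof -
  have "openin (poset_topology S R) S" by (simp add: openin_poset)
  then have "S \<subseteq> topspace (poset_topology S R)" by (rule openin_subset)
  moreover have "topspace (poset_topology S R) \<subseteq> S"
    unfolding topspace_def openin_poset by blast
  ultimately show ?thesis by blast
qed

lemma down_open:
  assumes T0: "finite_T0 S R" and y: "y \<in> S"
  shows "openin (poset_topology S R) {z\<in>S. (z,y) \<in> R}"
  unfolding openin_poset using T0_trans[OF T0] by blast

lemma cont_mono: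
  assumes T0: "finite_T0 S R"
    and c: "continuous_map (poset_topology S R) (poset_topology S R) f"
  shows "monor S R f"
proof -
  have img: "\<forall>x\<in>S. f x \<in> S" using c unfolding continuous_map_def topspace_poset by auto
  have "(f x, f y) \<in> R" if xy: "x \<in> S" "y \<in> S" "(x,y) \<in> R" for x y
  proof -
    have "openin (poset_topology S R) {z \<in> topspace (poset_topology S R). f z \<in> {z\<in>S. (z, f y) \<in> R}}"
      using openin_continuous_map_preimage[OF c down_open[OF T0, of "f y"]] img xy by auto
    then have o: "openin (poset_topology S R) {z\<in>S. f z \<in> S \<and> (f z, f y) \<in> R}"
      unfolding topspace_poset by simp
    have "y \<in> {z\<in>S. f z \<in> S \<and> (f z, f y) \<in> R}" using xy img T0_refl[OF T0] by auto
    then have "x \<in> {z\<in>S. f z \<in> S \<and> (f z, f y) \<in> R}" using o xy unfolding openin_poset by blast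
    then show ?thesis by auto
  qed
  then show ?thesis using img unfolding monor_def by auto
qed

lemma contractible_fence:
  assumes T0: "finite_T0 A R" and ne: "A \<noteq> {}"
    and con: "contractible_space (poset_topology A R)"
  shows "\<exists>a\<in>A. (cmp A R)\<^sup>*\<^sup>* id (\<lambda>_. a)"
proof -
  let ?X = "poset_topology A R"
  let ?I = "top_of_set {0..1::real}"
  obtain a where "homotopic_with (\<lambda>x. True) ?X ?X id (\<lambda>x. a)"
    using con unfolding contractible_space_def by blast
  then obtain h where hc: "continuous_map (prod_topology ?I ?X) ?X h"
    and h0': "\<forall>x. h (0,x) = id x" and h1: "\<forall>x. h (1,x) = a"
    unfolding homotopic_with_def by blast
  have h0: "\<forall>x. h (0,x) = x" using h0' by simp
  have finA: "finite A" using T0 by (rule T0_fin)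
  obtain x0 where x0: "x0 \<in> A" using ne by auto
  have aA: "a \<in> A"
  proof -
    have "h (1,x0) \<in> topspace ?X"
      using hc x0 unfolding continuous_map_def topspace_prod_topology topspace_poset by auto
    then show ?thesis using h1 by (simp add: topspace_poset)
  qed
  have ht: "continuous_map ?X ?X (\<lambda>x. h (t,x))" if t: "t \<in> {0..1}" for t
  proof -
    have "continuous_map ?X (prod_topology ?I ?X) (\<lambda>x. (t, x))"
      using t by (simp add: continuous_map_paired)
    from continuous_map_compose[OF this hc] show ?thesis by (simp add: comp_def)
  qed
  have mt: "monor A R (\<lambda>x. h (t,x))" if t: "t \<in> {0..1}" for t
    using cont_mono[OF T0 ht[OF t]] .
  have hx: "continuous_map ?I ?X (\<lambda>t. h (t,x))" if x: "x \<in> A" for x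
  proof -
    have "continuous_map ?I (prod_topology ?I ?X) (\<lambda>t. (t, x))"
      using x by (simp add: continuous_map_paired topspace_poset)
    from continuous_map_compose[OF this hc] show ?thesis by (simp add: comp_def)
  qed
  define N where "N t = {s\<in>{0..1}. \<forall>x\<in>A. (h (s,x), h (t,x)) \<in> R}" for t
  have openN: "openin ?I (N t)" if t: "t \<in> {0..1}" for t
  proof -
    have eq: "N t = \<Inter> ((\<lambda>x. {s \<in> topspace ?I. h (s,x) \<in> {z\<in>A. (z, h (t,x)) \<in> R}}) ` A)"
      unfolding N_def using mt ne by (auto simp: monor_def)
    show ?thesis unfolding eq
    proof (rule openin_Inter)
      show "finite ((\<lambda>x. {s \<in> topspace ?I. h (s,x) \<in> {z\<in>A. (z, h (t,x)) \<in> R}}) ` A)" using finA by simp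
      show "(\<lambda>x. {s \<in> topspace ?I. h (s,x) \<in> {z\<in>A. (z, h (t,x)) \<in> R}}) ` A \<noteq> {}" using ne by simp
      fix X assume "X \<in> (\<lambda>x. {s \<in> topspace ?I. h (s,x) \<in> {z\<in>A. (z, h (t,x)) \<in> R}}) ` A"
      then obtain x where x: "x \<in> A" and X: "X = {s \<in> topspace ?I. h (s,x) \<in> {z\<in>A. (z, h (t,x)) \<in> R}}" by auto
      have "h (t,x) \<in> A" using mt[OF t] x unfolding monor_def by auto
      then show "openin ?I X" unfolding X
        by (rule openin_continuous_map_preimage[OF hx[OF x] down_open[OF T0]])
    qed
  qed
  have tN: "t \<in> N t" if t: "t \<in> {0..1}" for t
    using mt[OF t] t T0_refl[OF T0] unfolding N_def monor_def by auto
  define F where "F t = (cmp A R)\<^sup>*\<^sup>* id (\<lambda>x. h (t,x))" for t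
  define C where "C = {t\<in>{0..1}. F t}"
  have step1: "F s" if t: "t \<in> {0..1}" and Ft: "F t" and s: "s \<in> N t" for s t
  proof -
    have s01: "s \<in> {0..1}" using s unfolding N_def by auto
    have "cmp A R (\<lambda>x. h (t,x)) (\<lambda>x. h (s,x))"
      using mt[OF t] mt[OF s01] s unfolding cmp_def N_def by auto
    then show ?thesis using Ft unfolding F_def by (rule rtranclp.rtrancl_into_rtrancl[rotated])
  qed
  have step2: "F t" if t: "t \<in> {0..1}" and Fs: "F s" and s: "s \<in> N t" for s t
  proof -
    have s01: "s \<in> {0..1}" using s unfolding N_def by auto
    have "cmp A R (\<lambda>x. h (s,x)) (\<lambda>x. h (t,x))"
      using mt[OF t] mt[OF s01] s unfolding cmp_def N_def by auto
    then show ?thesis using Fs unfolding F_def by (rule rtranclp.rtrancl_into_rtrancl[rotated])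
  qed
  have topI: "topspace ?I = {0..1}" by simp
  have oC: "openin ?I C"
  proof (subst openin_subopen, intro ballI)
    fix t assume t: "t \<in> C"
    show "\<exists>T. openin ?I T \<and> t \<in> T \<and> T \<subseteq> C"
    proof (intro exI conjI)
      have t01: "t \<in> {0..1}" and Ft: "F t" using t unfolding C_def by auto
      show "openin ?I (N t)" by (rule openN[OF t01])
      show "t \<in> N t" by (rule tN[OF t01])
      show "N t \<subseteq> C"
      proof
        fix s assume s: "s \<in> N t"
        have "s \<in> {0..1}" using s unfolding N_def by blast
        moreover have "F s" by (rule step1[OF t01 Ft s])
        ultimately show "s \<in> C" unfolding C_def by blast
      qed
    qed
  qed
  have oC': "openin ?I ({0..1} - C)"
  proof (subst openin_subopen, intro ballI)
    fix t assume t: "t \<in> {0..1} - C"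
    show "\<exists>T. openin ?I T \<and> t \<in> T \<and> T \<subseteq> {0..1} - C"
    proof (intro exI conjI)
      have t01: "t \<in> {0..1}" and Ft: "\<not> F t" using t unfolding C_def by auto
      show "openin ?I (N t)" by (rule openN[OF t01])
      show "t \<in> N t" by (rule tN[OF t01])
      show "N t \<subseteq> {0..1} - C"
      proof
        fix s assume s: "s \<in> N t"
        have "s \<in> {0..1}" using s unfolding N_def by blast
        moreover have "\<not> F s" using step2[OF t01 _ s] Ft by blast
        ultimately show "s \<in> {0..1} - C" unfolding C_def by blast
      qed
    qed
  qed
  have Csub: "C \<subseteq> {0..1}" unfolding C_def by blast
  have cC: "closedin ?I C" unfolding closedin_def topI using oC' Csub by blast
  have e0: "(\<lambda>x. h (0,x)) = id" by (rule ext) (simp add: h0)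
  have "F 0" unfolding F_def e0 by (rule rtranclp.rtrancl_refl)
  then have "0 \<in> C" unfolding C_def by auto
  have "C = {} \<or> C = {0..1}"
    using connected_clopen[THEN iffD1, OF connected_Icc[of "0::real" 1], rule_format, OF conjI[OF oC cC]] .
  then have "C = {0..1}" using \<open>0 \<in> C\<close> by (elim disjE) simp_all
  then have "(1::real) \<in> C" by simp
  then have "F 1" unfolding C_def by blast
  have e1: "(\<lambda>x. h (1,x)) = (\<lambda>_. a)" by (rule ext) (simp add: h1)
  have "(cmp A R)\<^sup>*\<^sup>* id (\<lambda>_. a)" using \<open>F 1\<close> unfolding F_def e1 .
  then show ?thesis using aA by blast
qed

definition dbeat :: "'a set \<Rightarrow> ('a \<times> 'a) set \<Rightarrow> 'a \<Rightarrow> 'a \<Rightarrow> bool" where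
  "dbeat A R x m \<longleftrightarrow> x \<in> A \<and> m \<in> A \<and> m \<noteq> x \<and> (m,x) \<in> R \<and>
     (\<forall>y\<in>A. (y,x) \<in> R \<and> y \<noteq> x \<longrightarrow> (y,m) \<in> R)"

lemma finite_T0_converse: "finite_T0 A R \<Longrightarrow> finite_T0 A (R\<inverse>)"
  unfolding finite_T0_def converse_iff by blast

lemma finite_T0_sub:
  assumes "finite_T0 A R" "B \<subseteq> A" shows "finite_T0 B (R \<inter> (B \<times> B))"
proof -
  have "finite B" using finite_subset[OF assms(2) T0_fin[OF assms(1)]] .
  then show ?thesis using assms unfolding finite_T0_def by blast
qed

lemma monor_converse: "monor A (R\<inverse>) g = monor A R g"
  unfolding monor_def converse_iff by blast

lemma below_id_beat:
  assumes T0: "finite_T0 A R" and g: "monor A R g" and le: "\<forall>x\<in>A. (g x, x) \<in> R"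
    and ne: "\<exists>x\<in>A. g x \<noteq> x"
  shows "\<exists>x m. dbeat A R x m"
proof -
  have finA: "finite A" using T0 by (rule T0_fin)
  have B: "{x\<in>A. g x \<noteq> x} \<noteq> {}" using ne by auto
  have finB: "finite {x\<in>A. g x \<noteq> x}" using finA by simp
  obtain x where x: "x \<in> {x\<in>A. g x \<noteq> x}" "\<forall>y\<in>{x\<in>A. g x \<noteq> x}. (y,x) \<in> R \<longrightarrow> y = x"
    using finite_has_minimal_rel[OF finB B T0_transA[OF T0] T0_antisymA[OF T0]] by blast
  have "dbeat A R x (g x)"
    unfolding dbeat_def
  proof (intro conjI ballI impI)
    show "x \<in> A" "g x \<in> A" "g x \<noteq> x" "(g x, x) \<in> R" using x g le unfolding monor_def by auto
    fix y assume y: "y \<in> A" "(y,x) \<in> R \<and> y \<noteq> x"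
    then have "g y = y" using x by auto
    moreover have "(g y, g x) \<in> R" using g y x unfolding monor_def by auto
    ultimately show "(y, g x) \<in> R" by simp
  qed
  then show ?thesis by blast
qed

lemma remove_facts:
  assumes T0: "finite_T0 A R" and x: "x \<in> A"
  shows "finite A" "x \<in> A" "(x,x) \<in> R" "\<forall>a b c. (a,b) \<in> R \<and> (b,c) \<in> R \<longrightarrow> (a,c) \<in> R"
    "\<forall>a b. (a,b) \<in> R \<and> (b,a) \<in> R \<longrightarrow> a = b"
proof -
  show "finite A" by (rule T0_fin[OF T0])
  show "x \<in> A" by (rule x)
  show "(x,x) \<in> R" by (rule T0_refl[OF T0 x])
  show "\<forall>a b c. (a,b) \<in> R \<and> (b,c) \<in> R \<longrightarrow> (a,c) \<in> R" by (rule T0_transA[OF T0])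
  show "\<forall>a b. (a,b) \<in> R \<and> (b,a) \<in> R \<longrightarrow> a = b" by (rule T0_antisymA[OF T0])
qed

lemma dbeat_ech:
  assumes T0: "finite_T0 A R" and b: "dbeat A R x m"
  shows "ech A R = ech (A - {x}) R"
proof -
  have xA: "x \<in> A" and mA: "m \<in> A" and mx: "m \<noteq> x" "(m,x) \<in> R"
    and bm: "\<forall>y\<in>A. (y,x) \<in> R \<and> y \<noteq> x \<longrightarrow> (y,m) \<in> R"
    using b unfolding dbeat_def by auto
  have "ech {y\<in>A. (y,x) \<in> R \<and> y \<noteq> x} R = 0"
  proof (rule ech_cone[of _ m])
    show "finite {y\<in>A. (y,x) \<in> R \<and> y \<noteq> x}" using T0_fin[OF T0] by simp
    show "m \<in> {y\<in>A. (y,x) \<in> R \<and> y \<noteq> x}" using mA mx by simp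
    show "\<forall>z\<in>{y\<in>A. (y,x) \<in> R \<and> y \<noteq> x}. (m,z) \<in> R \<or> (z,m) \<in> R" using bm by blast
    show "(m,m) \<in> R" using T0_refl[OF T0 mA] .
  qed
  note er = ech_remove[OF remove_facts[OF T0 xA]]
  show ?thesis using er unfolding \<open>ech _ R = 0\<close> by (simp only: mult_zero_left mult_zero_right diff_zero)
qed

lemma ubeat_ech:
  assumes T0: "finite_T0 A R" and b: "dbeat A (R\<inverse>) x m"
  shows "ech A R = ech (A - {x}) R"
proof -
  have xA: "x \<in> A" and mA: "m \<in> A" and mx: "m \<noteq> x" "(x,m) \<in> R"
    and bm: "\<forall>y\<in>A. (x,y) \<in> R \<and> y \<noteq> x \<longrightarrow> (m,y) \<in> R"
    using b unfolding dbeat_def by auto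
  have "ech {y\<in>A. (x,y) \<in> R \<and> y \<noteq> x} R = 0"
  proof (rule ech_cone[of _ m])
    show "finite {y\<in>A. (x,y) \<in> R \<and> y \<noteq> x}" using T0_fin[OF T0] by simp
    show "m \<in> {y\<in>A. (x,y) \<in> R \<and> y \<noteq> x}" using mA mx by simp
    show "\<forall>z\<in>{y\<in>A. (x,y) \<in> R \<and> y \<noteq> x}. (m,z) \<in> R \<or> (z,m) \<in> R" using bm by blast
    show "(m,m) \<in> R" using T0_refl[OF T0 mA] .
  qed
  note er = ech_remove[OF remove_facts[OF T0 xA]]
  show ?thesis using er unfolding \<open>ech _ R = 0\<close> by (simp only: mult_zero_left mult_zero_right diff_zero)
qed

lemma dbeat_retract_mono:
  assumes T0: "finite_T0 A R" and b: "dbeat A R x m"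
  shows "\<forall>y\<in>A. \<forall>z\<in>A. (y,z) \<in> R \<longrightarrow> ((if y = x then m else y), (if z = x then m else z)) \<in> R"
proof (intro ballI impI)
  fix y z assume y: "y \<in> A" and z: "z \<in> A" and yz: "(y,z) \<in> R"
  have mA: "m \<in> A" and mx: "(m,x) \<in> R"
    and bm: "\<forall>y\<in>A. (y,x) \<in> R \<and> y \<noteq> x \<longrightarrow> (y,m) \<in> R"
    using b unfolding dbeat_def by auto
  show "((if y = x then m else y), (if z = x then m else z)) \<in> R"
  proof (cases "y = x")
    case True
    show ?thesis
    proof (cases "z = x")
      case True
      then show ?thesis using \<open>y = x\<close> T0_refl[OF T0 mA] by simp
    next
      case False
      have "(m,z) \<in> R" using T0_trans[OF T0 mx] yz True by simp
      then show ?thesis using True False by simp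
    qed
  next
    case False
    show ?thesis
    proof (cases "z = x")
      case True
      have "(y,m) \<in> R" using bm y yz True False by blast
      then show ?thesis using True False by simp
    next
      case False
      then show ?thesis using \<open>y \<noteq> x\<close> yz by simp
    qed
  qed
qed

lemma fence_transport:
  assumes "(cmp A R)\<^sup>*\<^sup>* f g" and sub: "A' \<subseteq> A" and rA: "\<forall>x\<in>A. r x \<in> A'"
    and rm: "\<forall>x\<in>A. \<forall>y\<in>A. (x,y) \<in> R \<longrightarrow> (r x, r y) \<in> R"
  shows "(cmp A' (R \<inter> (A' \<times> A')))\<^sup>*\<^sup>* (r \<circ> f) (r \<circ> g)"
  using assms(1)
proof (induction rule: rtranclp_induct)
  case base then show ?case by simp
next
  case (step g g')
  have mono: "monor A' (R \<inter> (A' \<times> A')) (r \<circ> k)" if k: "monor A R k" for k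
  proof -
    have "\<forall>x\<in>A'. k x \<in> A" using k sub unfolding monor_def by blast
    then have 1: "\<forall>x\<in>A'. (r \<circ> k) x \<in> A'" using rA by simp
    have "\<forall>x\<in>A'. \<forall>y\<in>A'. (x,y) \<in> R \<longrightarrow> (r (k x), r (k y)) \<in> R"
      using k sub rm unfolding monor_def by blast
    then show ?thesis using 1 unfolding monor_def by simp
  qed
  have c: "cmp A R g g'" by fact
  then have mg: "monor A R g" "monor A R g'" unfolding cmp_def by auto
  have kA: "\<forall>x\<in>A'. g x \<in> A \<and> g' x \<in> A" using mg sub unfolding monor_def by blast
  have "(\<forall>x\<in>A'. (r (g x), r (g' x)) \<in> R) \<or> (\<forall>x\<in>A'. (r (g' x), r (g x)) \<in> R)"
    using c kA rm sub unfolding cmp_def by blast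
  then have "(\<forall>x\<in>A'. ((r \<circ> g) x, (r \<circ> g') x) \<in> R \<inter> (A' \<times> A')) \<or>
             (\<forall>x\<in>A'. ((r \<circ> g') x, (r \<circ> g) x) \<in> R \<inter> (A' \<times> A'))"
    using kA rA by auto
  then have "cmp A' (R \<inter> (A' \<times> A')) (r \<circ> g) (r \<circ> g')"
    unfolding cmp_def using mono[OF mg(1)] mono[OF mg(2)] by blast
  then show ?case using step(3) by (rule rtranclp.rtrancl_into_rtrancl[rotated])
qed

lemma beat_reduce:
  assumes T0: "finite_T0 A R" and b: "dbeat A R x m" and a: "a \<in> A"
    and fe: "(cmp A R)\<^sup>*\<^sup>* id (\<lambda>_. a)"
  shows "\<exists>a'\<in>A - {x}. (cmp (A - {x}) (R \<inter> ((A - {x}) \<times> (A - {x}))))\<^sup>*\<^sup>* id (\<lambda>_. a')"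
proof -
  define r where "r y = (if y = x then m else y)" for y
  let ?A = "A - {x}"
  have rA: "\<forall>y\<in>A. r y \<in> ?A" using b unfolding r_def dbeat_def by auto
  have rm: "\<forall>y\<in>A. \<forall>z\<in>A. (y,z) \<in> R \<longrightarrow> (r y, r z) \<in> R"
    using dbeat_retract_mono[OF T0 b] unfolding r_def .
  have 1: "(cmp ?A (R \<inter> (?A \<times> ?A)))\<^sup>*\<^sup>* (r \<circ> id) (r \<circ> (\<lambda>_. a))"
    by (rule fence_transport[OF fe _ rA rm]) blast
  have rid: "\<forall>y\<in>?A. r y = y" unfolding r_def by simp
  have 2: "cmp ?A (R \<inter> (?A \<times> ?A)) id r"
    unfolding cmp_def monor_def
  proof (intro conjI)
    show "\<forall>y\<in>?A. id y \<in> ?A" by simp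
    show "\<forall>y\<in>?A. \<forall>z\<in>?A. (y,z) \<in> R \<inter> (?A \<times> ?A) \<longrightarrow> (id y, id z) \<in> R \<inter> (?A \<times> ?A)" by simp
    show "\<forall>y\<in>?A. r y \<in> ?A" using rid by simp
    show "\<forall>y\<in>?A. \<forall>z\<in>?A. (y,z) \<in> R \<inter> (?A \<times> ?A) \<longrightarrow> (r y, r z) \<in> R \<inter> (?A \<times> ?A)" using rid by simp
    have "\<forall>y\<in>?A. (y, y) \<in> R" using T0_refl[OF T0] by blast
    then show "(\<forall>y\<in>?A. (id y, r y) \<in> R \<inter> (?A \<times> ?A)) \<or> (\<forall>y\<in>?A. (r y, id y) \<in> R \<inter> (?A \<times> ?A))"
      using rid by simp
  qed
  have 3: "(cmp ?A (R \<inter> (?A \<times> ?A)))\<^sup>*\<^sup>* id (r \<circ> (\<lambda>_. a))"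
    using converse_rtranclp_into_rtranclp[OF 2 1[unfolded comp_id]] .
  have e: "r \<circ> (\<lambda>_. a) = (\<lambda>_. r a)" by (rule ext) simp
  have "(cmp ?A (R \<inter> (?A \<times> ?A)))\<^sup>*\<^sup>* id (\<lambda>_. r a)" using 3[unfolded e] .
  then show ?thesis using rA a by blast
qed

lemma cmp_converse: "cmp A (R\<inverse>) = cmp A R"
  unfolding cmp_def monor_converse converse_iff by (intro ext) blast

lemma ech_converse: "ech A (R\<inverse>) = ech A R"
proof -
  have "pchains A (R\<inverse>) = pchains A R" unfolding pchains_def converse_iff by blast
  then show ?thesis unfolding ech_def by simp
qed

lemma stong:
  assumes "finite_T0 A R" "a \<in> A" "(cmp A R)\<^sup>*\<^sup>* id (\<lambda>_. a)"
  shows "ech A R = 0"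
  using assms
proof (induction "card A" arbitrary: A R a rule: less_induct)
  case less
  note T0 = less.prems(1)
  have finA: "finite A" using T0 by (rule T0_fin)
  show ?case
  proof (cases "\<exists>x m. dbeat A R x m")
    case True
    then obtain x m where b: "dbeat A R x m" by blast
    obtain a' where a': "a' \<in> A - {x}"
      and fe: "(cmp (A - {x}) (R \<inter> ((A - {x}) \<times> (A - {x}))))\<^sup>*\<^sup>* id (\<lambda>_. a')"
      using beat_reduce[OF T0 b less.prems(2,3)] by blast
    have xA: "x \<in> A" using b unfolding dbeat_def by auto
    have lt: "card (A - {x}) < card A" using finA xA by (rule card_Diff1_less)
    have "ech (A - {x}) (R \<inter> ((A - {x}) \<times> (A - {x}))) = 0"
      by (rule less.hyps[OF lt finite_T0_sub[OF T0] a' fe]) blast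
    then have "ech (A - {x}) R = 0" using ech_restrict[of "A - {x}" R] by simp
    then show ?thesis using dbeat_ech[OF T0 b] by simp
  next
    case nd: False
    show ?thesis
    proof (cases "\<exists>x m. dbeat A (R\<inverse>) x m")
      case True
      then obtain x m where b: "dbeat A (R\<inverse>) x m" by blast
      note T0' = finite_T0_converse[OF T0]
      have fe0: "(cmp A (R\<inverse>))\<^sup>*\<^sup>* id (\<lambda>_. a)" unfolding cmp_converse by (rule less.prems(3))
      obtain a' where a': "a' \<in> A - {x}"
        and fe: "(cmp (A - {x}) (R\<inverse> \<inter> ((A - {x}) \<times> (A - {x}))))\<^sup>*\<^sup>* id (\<lambda>_. a')"
        using beat_reduce[OF T0' b less.prems(2) fe0] by blast
      have xA: "x \<in> A" using b unfolding dbeat_def by auto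
      have lt: "card (A - {x}) < card A" using finA xA by (rule card_Diff1_less)
      have "ech (A - {x}) (R\<inverse> \<inter> ((A - {x}) \<times> (A - {x}))) = 0"
        by (rule less.hyps[OF lt finite_T0_sub[OF T0'] a' fe]) blast
      then have "ech (A - {x}) R = 0"
        using ech_restrict[of "A - {x}" "R\<inverse>"] ech_converse[of "A - {x}" R] by simp
      then show ?thesis using ubeat_ech[OF T0 b] by simp
    next
      case nu: False
      have "\<forall>x\<in>A. g x = x" if "(cmp A R)\<^sup>*\<^sup>* id g" for g
        using that
      proof (induction rule: rtranclp_induct)
        case base then show ?case by simp
      next
        case (step f g)
        have c: "cmp A R f g" by fact
        have fid: "\<forall>x\<in>A. f x = x" by fact
        show ?case
        proof (rule ccontr)
          assume ne0: "\<not> (\<forall>x\<in>A. g x = x)"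
          then have ne: "\<exists>x\<in>A. g x \<noteq> x" by blast
          have mg: "monor A R g" using c unfolding cmp_def by blast
          have "(\<forall>x\<in>A. (f x, g x) \<in> R) \<or> (\<forall>x\<in>A. (g x, f x) \<in> R)"
            using c unfolding cmp_def by blast
          then have "(\<forall>x\<in>A. (x, g x) \<in> R) \<or> (\<forall>x\<in>A. (g x, x) \<in> R)"
            using fid by simp
          then show False
          proof
            assume "\<forall>x\<in>A. (x, g x) \<in> R"
            then have le: "\<forall>x\<in>A. (g x, x) \<in> R\<inverse>" by simp
            have mg': "monor A (R\<inverse>) g" using mg monor_converse by blast
            have "\<exists>x m. dbeat A (R\<inverse>) x m"
              by (rule below_id_beat[OF finite_T0_converse[OF T0] mg' le ne])
            then show False using nu by blast
          next
            assume le: "\<forall>x\<in>A. (g x, x) \<in> R"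
            have "\<exists>x m. dbeat A R x m"
              by (rule below_id_beat[OF T0 mg le ne])
            then show False using nd by blast
          qed
        qed
      qed
      then have all: "\<forall>x\<in>A. x = a" using less.prems(3) by fastforce
      show ?thesis
      proof (rule ech_cone[of _ a])
        show "finite A" by (rule finA)
        show "a \<in> A" by (rule less.prems(2))
        show "(a,a) \<in> R" using T0_refl[OF T0 less.prems(2)] .
        show "\<forall>z\<in>A. (a,z) \<in> R \<or> (z,a) \<in> R"
        proof
          fix z assume "z \<in> A"
          then have "z = a" using all by blast
          then show "(a,z) \<in> R \<or> (z,a) \<in> R" using T0_refl[OF T0 less.prems(2)] by simp
        qed
      qed
    qed
  qed
qed

lemma contractible_ech:
  assumes T0: "finite_T0 S R" and D: "D \<subseteq> S" and c: "poset_contractible D R"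
  shows "ech D R = 0"
proof -
  have T0D: "finite_T0 D (R \<inter> (D \<times> D))" by (rule finite_T0_sub[OF T0 D])
  have ne: "D \<noteq> {}" and cs: "contractible_space (poset_topology D (R \<inter> (D \<times> D)))"
    using c unfolding poset_contractible_def by auto
  obtain a where a: "a \<in> D" "(cmp D (R \<inter> (D \<times> D)))\<^sup>*\<^sup>* id (\<lambda>_. a)"
    using contractible_fence[OF T0D ne cs] by blast
  have "ech D (R \<inter> (D \<times> D)) = 0" by (rule stong[OF T0D a])
  then show ?thesis using ech_restrict[of D R] by simp
qed

lemma homeo_ech:
  assumes "poset_homeomorphic S R T Q"
  shows "ech S R = ech T Q"
proof -
  obtain f where bij: "bij_betw f S T" and pres: "\<forall>x\<in>S. \<forall>y\<in>S. (x,y) \<in> R \<longleftrightarrow> (f x, f y) \<in> Q"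
    using assms unfolding poset_homeomorphic_def by blast
  have inj: "inj_on f S" and img: "f ` S = T" using bij unfolding bij_betw_def by auto
  have inj2: "inj_on (image f) (pchains S R)"
    unfolding inj_on_def pchains_def using inj_on_image_eq_iff[OF inj] by blast
  have eq: "image f ` pchains S R = pchains T Q"
  proof
    show "image f ` pchains S R \<subseteq> pchains T Q"
    proof
      fix c' assume "c' \<in> image f ` pchains S R"
      then obtain c where c: "c \<in> pchains S R" and c': "c' = f ` c" by blast
      have cS: "c \<subseteq> S" and ch: "\<forall>a\<in>c. \<forall>b\<in>c. (a,b) \<in> R \<or> (b,a) \<in> R"
        using c unfolding pchains_def by blast+
      have "f ` c \<subseteq> T" using cS img by blast
      moreover have "\<forall>u\<in>f ` c. \<forall>v\<in>f ` c. (u,v) \<in> Q \<or> (v,u) \<in> Q"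
      proof (intro ballI)
        fix u v assume "u \<in> f ` c" "v \<in> f ` c"
        then obtain a b where ab: "a \<in> c" "b \<in> c" "u = f a" "v = f b" by blast
        then have "a \<in> S" "b \<in> S" using cS by blast+
        then show "(u,v) \<in> Q \<or> (v,u) \<in> Q" using ch ab pres by blast
      qed
      ultimately show "c' \<in> pchains T Q" unfolding c' pchains_def by blast
    qed
    show "pchains T Q \<subseteq> image f ` pchains S R"
    proof
      fix c' assume c': "c' \<in> pchains T Q"
      let ?c = "{x\<in>S. f x \<in> c'}"
      have "f ` ?c = c'" using c' img unfolding pchains_def by auto
      moreover have "?c \<in> pchains S R" using c' pres unfolding pchains_def by auto
      ultimately show "c' \<in> image f ` pchains S R" by blast
    qed
  qed
  have "ech T Q = (\<Sum>c\<in>pchains S R. (-1) ^ card (f ` c))"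
    unfolding ech_def eq[symmetric] by (subst sum.reindex[OF inj2]) (simp add: comp_def)
  also have "\<dots> = ech S R"
    unfolding ech_def
  proof (rule sum.cong)
    fix c assume "c \<in> pchains S R"
    then have "c \<subseteq> S" unfolding pchains_def by auto
    then have "card (f ` c) = card c" using inj by (intro card_image) (rule inj_on_subset)
    then show "(-1::int) ^ card (f ` c) = (-1) ^ card c" by simp
  qed simp
  finally show ?thesis by simp
qed

lemma weak_beat_ech:
  assumes T0: "finite_T0 S R" and w: "weak_beat_point S R x"
  shows "ech S R = ech (S - {x}) R"
proof -
  have xS: "x \<in> S" using w unfolding weak_beat_point_def by blast
  note er = ech_remove[OF remove_facts[OF T0 xS]]
  have "poset_contractible {y\<in>S. (y,x) \<in> R \<and> y \<noteq> x} R \<or> poset_contractible {y\<in>S. (x,y) \<in> R \<and> y \<noteq> x} R"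
    using w unfolding weak_beat_point_def by blast
  then show ?thesis
  proof
    assume "poset_contractible {y\<in>S. (y,x) \<in> R \<and> y \<noteq> x} R"
    then have "ech {y\<in>S. (y,x) \<in> R \<and> y \<noteq> x} R = 0" by (rule contractible_ech[OF T0, rotated]) blast
    then show ?thesis using er by (simp only: mult_zero_left diff_zero)
  next
    assume "poset_contractible {y\<in>S. (x,y) \<in> R \<and> y \<noteq> x} R"
    then have "ech {y\<in>S. (x,y) \<in> R \<and> y \<noteq> x} R = 0" by (rule contractible_ech[OF T0, rotated]) blast
    then show ?thesis using er by (simp only: mult_zero_right diff_zero)
  qed
qed

lemma move_ech:
  assumes "elementary_move P Q"
  shows "ech (fst P) (snd P) = ech (fst Q) (snd Q)"
  using assms unfolding elementary_move_def
proof (elim conjE disjE exE)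
  fix x assume T0: "finite_T0 (fst P) (snd P)" and w: "weak_beat_point (fst P) (snd P) x"
    and e: "fst Q = fst P - {x}" "snd Q = snd P \<inter> (fst Q \<times> fst Q)"
  have "ech (fst P) (snd P) = ech (fst P - {x}) (snd P)" by (rule weak_beat_ech[OF T0 w])
  also have "\<dots> = ech (fst Q) (snd Q)" using e ech_restrict[of "fst Q" "snd P"] by simp
  finally show ?thesis .
next
  fix x assume T0: "finite_T0 (fst Q) (snd Q)" and w: "weak_beat_point (fst Q) (snd Q) x"
    and e: "fst P = fst Q - {x}" "snd P = snd Q \<inter> (fst P \<times> fst P)"
  have "ech (fst Q) (snd Q) = ech (fst Q - {x}) (snd Q)" by (rule weak_beat_ech[OF T0 w])
  also have "\<dots> = ech (fst P) (snd P)" using e ech_restrict[of "fst P" "snd Q"] by simp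
  finally show ?thesis by simp
qed

theorem mainTheorem9:
  fixes S :: "'a set" and R :: "('a \<times> 'a) set" and T :: "'b set" and Q :: "('b \<times> 'b) set"
  assumes "finite_T0 S R" and "finite_T0 T Q"
    and "simple_homotopy_equivalent S R T Q"
  shows "rank_bar S R = rank_bar T Q"
proof -
  obtain P0 P1 where h0: "poset_homeomorphic S R (fst P0) (snd P0)"
    and mv: "elementary_move\<^sup>*\<^sup>* P0 P1" and h1: "poset_homeomorphic (fst P1) (snd P1) T Q"
    using assms(3) unfolding simple_homotopy_equivalent_def by blast
  have "ech (fst P0) (snd P0) = ech (fst P1) (snd P1)"
    using mv
  proof (induction rule: rtranclp_induct)
    case base then show ?case by (rule refl)
  next
    case (step y z) show ?case using step(3) move_ech[OF step(2)] by (rule trans)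
  qed
  then have "ech S R = ech T Q" using homeo_ech[OF h0] homeo_ech[OF h1] by simp
  then show ?thesis using rank_bar_formula[OF assms(1)] rank_bar_formula[OF assms(2)] by simp
qed

end
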